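(* In the setting described in the context, for every $j\in[\varepsilon^{-1}-1]$ and every $i\in I$ it holds that $\lambda^j_i\le1$ and $\gamma^j_i\le1$.
   Context: A CMK instance is $\mathcal{I}=(I,w,v,m,k)$ with $I$ a finite item set, $w:I\to[0,1]$, $v:I\to\mathbb{R}_{\ge0}$, $m,k\in\mathbb{N}_{>0}$. A configuration is $C\subseteq I$ with $|C|\le k$ and $\sum_{i\in C}w(i)\le1$; $\mathcal{C}$ is the set of configurations and $\mathcal{C}(i)=\{C\in\mathcal{C}:i\in C\}$. A solution is a tuple of $m$ configurations, with value $v$ of their union; $\mathrm{OPT}(\mathcal{I})$ is the maximum value. A fractional solution is $x\in\mathbb{R}_{\ge0}^{\mathcal{C}}$, with $\mathrm{cover}_i(x)=\sum_{C\in\mathcal{C}(i)}x_C$, $\|x\|=\sum_Cx_C$; it is feasible if $\mathrm{cover}(x)\in[0,1]^I$; for $y\in\mathbb{R}^I$, $v(y)=\sum_iy_iv(i)$, and $v(x)=v(\mathrm{cover}(x))$. For $S\subseteq I$ and $\ell\in\mathbb{N}$, $\mathrm{LP}(S,\ell)$ is: maximize $v(x)$ over feasible fractional solutions $x$ with $x_C=0$ whenever $C\not\subseteq S$, and $\|x\|=\ell$. For $\|x\|\ne0$, a random configuration $R$ is distributed by $x$ ($R\sim x$) if $\Pr(R=C)=x_C/\|x\|$. Given $\varepsilon\in(0,0.1)$, $\mathcal{I}$ is $\varepsilon$-simple if $m>\exp(\exp(\varepsilon^{-30}))$ and $\varepsilon m\in\mathbb{N}$. Iterative randomized rounding: let $\varepsilon\in(0,0.1)$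 with $\varepsilon^{-1/2}\in\mathbb{N}$ and $\mathcal{I}$ be $\varepsilon$-simple; let $q=\varepsilon m$ and $S_0=I$. For $j=1,\dots,\varepsilon^{-1}$: let $m_j=m(1-(j-1)\varepsilon)$; let $x^j$ be a $(1-\varepsilon)$-approximate solution of $\mathrm{LP}(S_{j-1},m_j)$ (a feasible solution of value at least $(1-\varepsilon)$ times its optimum), determined by the outcomes of the samples of previous iterations; sample independently $R^j_1,\dots,R^j_q\sim x^j$; set $S_j=S_{j-1}\setminus\bigcup_{b=1}^qR^j_b$. Let $\mathcal{F}_0$ be the trivial $\sigma$-algebra and $\mathcal{F}_j$ the $\sigma$-algebra generated by $\{R^{j'}_b: j'\le j,\ b\in[q]\}$. Fix an optimal solution $(C^*_1,\dots,C^*_m)$ and let $S^*=\bigcup_bC^*_b$ (so $v(S^* )=\mathrm{OPT}(\mathcal{I})$). Define $\gamma^0=\mathbb{1}_{S^*}\in\{0,1\}^I$ (indicator vector of $S^*$). For $j=1,\dots,\varepsilon^{-1}-1$ define $\lambda^j\in\mathbb{R}^I_{\ge0}$ by $\lambda^j_i=\frac{1-j\varepsilon}{1-(j-1)\varepsilon}\cdot\frac{1}{\Pr(i\in S_j\mid\mathcal{F}_{j-1})}\cdot\gamma^{j-1}_i$ for $i\in S_{j-1}$ (this conditional probability is positive for such $i$) and $\lambda^j_i=0$ for $i\notin S_{j-1}$; and define $\gamma^j_i=\mathbb{1}_{i\in S_j}\cdot\lambda^j_i$ for all $i\in I$. *)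

theory Defs
  imports "HOL-Probability.Probability"
begin

definition is_config :: "'a set \<Rightarrow> ('a \<Rightarrow> real) \<Rightarrow> nat \<Rightarrow> 'a set \<Rightarrow> bool" where
  "is_config I w k C \<longleftrightarrow> C \<subseteq> I \<and> card C \<le> k \<and> (\<Sum>i\<in>C. w i) \<le> 1"

definition configs :: "'a set \<Rightarrow> ('a \<Rightarrow> real) \<Rightarrow> nat \<Rightarrow> 'a set set" where
  "configs I w k = {C. is_config I w k C}"

definition is_solution :: "'a set \<Rightarrow> ('a \<Rightarrow> real) \<Rightarrow> nat \<Rightarrow> nat \<Rightarrow> 'a set list \<Rightarrow> bool" where
  "is_solution I w k m Cs \<longleftrightarrow> length Cs = m \<and> (\<forall>C\<in>set Cs. is_config I w k C)"

definition setval :: "('a \<Rightarrow> real) \<Rightarrow> 'a set \<Rightarrow> real" where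
  "setval v S = (\<Sum>i\<in>S. v i)"

definition is_optimal_solution ::
  "'a set \<Rightarrow> ('a \<Rightarrow> real) \<Rightarrow> ('a \<Rightarrow> real) \<Rightarrow> nat \<Rightarrow> nat \<Rightarrow> 'a set list \<Rightarrow> bool" where
  "is_optimal_solution I w v m k Cs \<longleftrightarrow> is_solution I w k m Cs \<and>
     (\<forall>Ds. is_solution I w k m Ds \<longrightarrow> setval v (\<Union>(set Ds)) \<le> setval v (\<Union>(set Cs)))"

definition cover :: "'a set \<Rightarrow> ('a \<Rightarrow> real) \<Rightarrow> nat \<Rightarrow> ('a set \<Rightarrow> real) \<Rightarrow> 'a \<Rightarrow> real" where
  "cover I w k x i = (\<Sum>C\<in>{C\<in>configs I w k. i \<in> C}. x C)"

definition fnorm :: "'a set \<Rightarrow> ('a \<Rightarrow> real) \<Rightarrow> nat \<Rightarrow> ('a set \<Rightarrow> real) \<Rightarrow> real" where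
  "fnorm I w k x = (\<Sum>C\<in>configs I w k. x C)"

definition is_frac_solution :: "'a set \<Rightarrow> ('a \<Rightarrow> real) \<Rightarrow> nat \<Rightarrow> ('a set \<Rightarrow> real) \<Rightarrow> bool" where
  "is_frac_solution I w k x \<longleftrightarrow> (\<forall>C. x C \<ge> 0) \<and> (\<forall>C. C \<notin> configs I w k \<longrightarrow> x C = 0)"

definition feasible_frac :: "'a set \<Rightarrow> ('a \<Rightarrow> real) \<Rightarrow> nat \<Rightarrow> ('a set \<Rightarrow> real) \<Rightarrow> bool" where
  "feasible_frac I w k x \<longleftrightarrow> is_frac_solution I w k x \<and> (\<forall>i\<in>I. cover I w k x i \<le> 1)"

definition vecval :: "'a set \<Rightarrow> ('a \<Rightarrow> real) \<Rightarrow> ('a \<Rightarrow> real) \<Rightarrow> real" where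
  "vecval I v y = (\<Sum>i\<in>I. y i * v i)"

definition fracval :: "'a set \<Rightarrow> ('a \<Rightarrow> real) \<Rightarrow> ('a \<Rightarrow> real) \<Rightarrow> nat \<Rightarrow> ('a set \<Rightarrow> real) \<Rightarrow> real" where
  "fracval I w v k x = vecval I v (cover I w k x)"

definition LP_feasible ::
  "'a set \<Rightarrow> ('a \<Rightarrow> real) \<Rightarrow> nat \<Rightarrow> 'a set \<Rightarrow> real \<Rightarrow> ('a set \<Rightarrow> real) \<Rightarrow> bool" where
  "LP_feasible I w k S l x \<longleftrightarrow> feasible_frac I w k x \<and> (\<forall>C. \<not> C \<subseteq> S \<longrightarrow> x C = 0)
      \<and> fnorm I w k x = l"

definition LP_opt ::
  "'a set \<Rightarrow> ('a \<Rightarrow> real) \<Rightarrow> ('a \<Rightarrow> real) \<Rightarrow> nat \<Rightarrow> 'a set \<Rightarrow> real \<Rightarrow> real" where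
  "LP_opt I w v k S l = (SUP x\<in>{x. LP_feasible I w k S l x}. fracval I w v k x)"

definition LP_approx ::
  "real \<Rightarrow> 'a set \<Rightarrow> ('a \<Rightarrow> real) \<Rightarrow> ('a \<Rightarrow> real) \<Rightarrow> nat \<Rightarrow> 'a set \<Rightarrow> real \<Rightarrow> ('a set \<Rightarrow> real) \<Rightarrow> bool" where
  "LP_approx eps I w v k S l x \<longleftrightarrow> LP_feasible I w k S l x \<and>
      fracval I w v k x \<ge> (1 - eps) * LP_opt I w v k S l"

definition config_pmf :: "'a set \<Rightarrow> ('a \<Rightarrow> real) \<Rightarrow> nat \<Rightarrow> ('a set \<Rightarrow> real) \<Rightarrow> 'a set pmf" where
  "config_pmf I w k x = embed_pmf (\<lambda>C. x C / fnorm I w k x)"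

fun iid_samples :: "nat \<Rightarrow> 'b pmf \<Rightarrow> 'b list pmf" where
  "iid_samples 0 p = return_pmf []"
| "iid_samples (Suc n) p = bind_pmf p (\<lambda>C. map_pmf (\<lambda>Cs. C # Cs) (iid_samples n p))"

text \<open>A history of j rounds is a list h of j rounds; round j' (1-based) is h ! (j'-1),
  the list of samples R^{j'}_1..R^{j'}_q. The remaining set after the rounds in h.\<close>
definition remaining :: "'a set \<Rightarrow> 'a set list list \<Rightarrow> 'a set" where
  "remaining I h = I - (\<Union>r\<in>set h. \<Union>(set r))"

text \<open>A history lies in the support of the process: every round has q samples and every
  sample of round j'+1 has positive weight in x^{j'+1} = X (take j' h).\<close>
definition reachable :: "('a set list list \<Rightarrow> 'a set \<Rightarrow> real) \<Rightarrow> nat \<Rightarrow> 'a set list list \<Rightarrow> bool" where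
  "reachable X q h \<longleftrightarrow> (\<forall>j'<length h. length (h ! j') = q \<and> (\<forall>C\<in>set (h ! j'). X (take j' h) C > 0))"

text \<open>Pr(i \<in> S_j | F_{j-1}), evaluated at the outcome h (of which only the first j-1
  rounds matter): probability over the fresh samples R^j_1..R^j_q \<sim> x^j = X (take (j-1) h).\<close>
definition surv_prob ::
  "'a set \<Rightarrow> ('a \<Rightarrow> real) \<Rightarrow> nat \<Rightarrow> nat \<Rightarrow> ('a set list list \<Rightarrow> 'a set \<Rightarrow> real) \<Rightarrow> nat
    \<Rightarrow> 'a set list list \<Rightarrow> 'a \<Rightarrow> real" where
  "surv_prob I w k q X j h i =
     measure_pmf.prob (iid_samples q (config_pmf I w k (X (take (j - 1) h))))
       {Rs. i \<in> remaining I (take (j - 1) h) - \<Union>(set Rs)}"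

definition lam ::
  "real \<Rightarrow> 'a set \<Rightarrow> ('a \<Rightarrow> real) \<Rightarrow> nat \<Rightarrow> nat \<Rightarrow> ('a set list list \<Rightarrow> 'a set \<Rightarrow> real) \<Rightarrow> nat
    \<Rightarrow> 'a set list list \<Rightarrow> ('a \<Rightarrow> real) \<Rightarrow> 'a \<Rightarrow> real" where
  "lam eps I w k q X j h g i =
     (if i \<in> remaining I (take (j - 1) h)
      then (1 - real j * eps) / (1 - (real j - 1) * eps) * (1 / surv_prob I w k q X j h i) * g i
      else 0)"

fun gam ::
  "real \<Rightarrow> 'a set \<Rightarrow> ('a \<Rightarrow> real) \<Rightarrow> nat \<Rightarrow> nat \<Rightarrow> ('a set list list \<Rightarrow> 'a set \<Rightarrow> real)
    \<Rightarrow> 'a set \<Rightarrow> nat \<Rightarrow> 'a set list list \<Rightarrow> 'a \<Rightarrow> real" where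
  "gam eps I w k q X Sstar 0 h = indicator Sstar"
| "gam eps I w k q X Sstar (Suc j) h =
     (\<lambda>i. if i \<in> remaining I (take (Suc j) h)
          then lam eps I w k q X (Suc j) h (gam eps I w k q X Sstar j h) i else 0)"

end

theory Submission
  imports Defs
begin

lemma iid_emeasure:
  "emeasure (measure_pmf (iid_samples n p)) {Rs. \<forall>R\<in>set Rs. i \<notin> R}
     = ennreal (measure_pmf.prob p {C. i \<notin> C} ^ n)"
proof (induction n)
  case 0
  then show ?case by (simp add: measure_pmf.emeasure_eq_measure)
next
  case (Suc n)
  have eq: "\<And>C. emeasure (measure_pmf (map_pmf ((#) C) (iid_samples n p))) {Rs. \<forall>R\<in>set Rs. i \<notin> R}
     = indicator {C. i \<notin> C} C * ennreal (measure_pmf.prob p {C. i \<notin> C} ^ n)"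
  proof -
    fix C
    show "?thesis C"
    proof (cases "i \<in> C")
      case True
      then have "((#) C) -` {Rs. \<forall>R\<in>set Rs. i \<notin> R} = {}" by auto
      then show ?thesis using True by (simp add: emeasure_map_pmf)
    next
      case False
      then have "((#) C) -` {Rs. \<forall>R\<in>set Rs. i \<notin> R} = {Rs. \<forall>R\<in>set Rs. i \<notin> R}" by auto
      then show ?thesis using False Suc by (simp add: emeasure_map_pmf)
    qed
  qed
  have "emeasure (measure_pmf (iid_samples (Suc n) p)) {Rs. \<forall>R\<in>set Rs. i \<notin> R}
     = (\<integral>\<^sup>+C. emeasure (measure_pmf (map_pmf ((#) C) (iid_samples n p))) {Rs. \<forall>R\<in>set Rs. i \<notin> R} \<partial>measure_pmf p)"
    by (simp only: iid_samples.simps emeasure_bind_pmf)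
  also have "\<dots> = (\<integral>\<^sup>+C. indicator {C. i \<notin> C} C * ennreal (measure_pmf.prob p {C. i \<notin> C} ^ n) \<partial>measure_pmf p)"
    by (simp only: eq)
  also have "\<dots> = emeasure (measure_pmf p) {C. i \<notin> C} * ennreal (measure_pmf.prob p {C. i \<notin> C} ^ n)"
    by (simp add: nn_integral_multc)
  also have "\<dots> = ennreal (measure_pmf.prob p {C. i \<notin> C} ^ Suc n)"
    by (simp add: measure_pmf.emeasure_eq_measure ennreal_mult' mult.commute)
  finally show ?case .
qed

lemma iid_prob:
  "measure_pmf.prob (iid_samples n p) {Rs. \<forall>R\<in>set Rs. i \<notin> R}
     = measure_pmf.prob p {C. i \<notin> C} ^ n"
  using iid_emeasure[of n p i]
  by (simp add: measure_pmf.emeasure_eq_measure)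

lemma configs_finite: "finite I \<Longrightarrow> finite (configs I w k)"
  by (rule finite_subset[of _ "Pow I"]) (auto simp: configs_def is_config_def)

lemma config_prob:
  assumes finI: "finite I" and fr: "is_frac_solution I w k x" and M: "fnorm I w k x > 0"
  shows "measure_pmf.prob (config_pmf I w k x) {C. i \<notin> C} = 1 - cover I w k x i / fnorm I w k x"
proof -
  define M where "M = fnorm I w k x"
  define f where "f C = x C / M" for C
  have nn: "\<And>C. 0 \<le> f C" using fr M by (auto simp: f_def M_def is_frac_solution_def)
  have fin: "finite (configs I w k)" using configs_finite[OF finI] .
  have z: "\<And>C. C \<notin> configs I w k \<Longrightarrow> f C = 0" using fr by (auto simp: f_def is_frac_solution_def)
  have "(\<integral>\<^sup>+C. ennreal (f C) \<partial>count_space UNIV) = (\<Sum>C\<in>configs I w k. ennreal (f C))"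
    by (rule nn_integral_count_space'[OF fin]) (auto simp: z)
  also have "\<dots> = ennreal (\<Sum>C\<in>configs I w k. f C)"
    using nn by (simp add: sum_ennreal)
  also have "(\<Sum>C\<in>configs I w k. f C) = 1"
    using M by (simp add: f_def sum_divide_distrib[symmetric] M_def fnorm_def[symmetric])
  finally have int1: "(\<integral>\<^sup>+C. ennreal (f C) \<partial>count_space UNIV) = 1" by simp
  have cp: "config_pmf I w k x = embed_pmf f"
    by (simp add: config_pmf_def f_def[abs_def] M_def)
  have pmf: "\<And>C. pmf (embed_pmf f) C = f C" using pmf_embed_pmf[OF nn int1] .
  have sp: "set_pmf (embed_pmf f) \<subseteq> configs I w k"
    using set_embed_pmf[OF nn int1] z by auto
  have "measure_pmf.prob (embed_pmf f) {C. i \<in> C} = measure_pmf.prob (embed_pmf f) ({C. i \<in> C} \<inter> set_pmf (embed_pmf f))"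
    by (simp add: measure_Int_set_pmf)
  also have "{C. i \<in> C} \<inter> set_pmf (embed_pmf f) = {C\<in>configs I w k. i \<in> C} \<inter> set_pmf (embed_pmf f)"
    using sp by auto
  also have "measure_pmf.prob (embed_pmf f) \<dots> = measure_pmf.prob (embed_pmf f) {C\<in>configs I w k. i \<in> C}"
    by (simp add: measure_Int_set_pmf)
  also have "\<dots> = (\<Sum>C\<in>{C\<in>configs I w k. i \<in> C}. f C)"
    using fin by (simp add: measure_measure_pmf_finite pmf)
  also have "\<dots> = cover I w k x i / M"
    by (simp add: f_def cover_def sum_divide_distrib)
  finally have pin: "measure_pmf.prob (embed_pmf f) {C. i \<in> C} = cover I w k x i / M" .
  have "{C. i \<notin> C} = space (measure_pmf (embed_pmf f)) - {C. i \<in> C}" by auto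
  then have "measure_pmf.prob (embed_pmf f) {C. i \<notin> C} = 1 - measure_pmf.prob (embed_pmf f) {C. i \<in> C}"
    using measure_pmf.prob_compl[of "{C. i \<in> C}" "embed_pmf f"] by simp
  then show ?thesis using pin cp M_def by simp
qed

theorem lemma4p6:
  fixes I :: "'a set" and w v :: "'a \<Rightarrow> real" and m k q :: nat and eps :: real
    and X :: "'a set list list \<Rightarrow> 'a set \<Rightarrow> real"
    and Cstar :: "'a set list"
  assumes finI: "finite I"
    and w01: "\<forall>i\<in>I. 0 \<le> w i \<and> w i \<le> 1"
    and vnn: "\<forall>i\<in>I. 0 \<le> v i"
    and mpos: "m > 0" and kpos: "k > 0"
    and eps: "0 < eps" "eps < 0.1"
    and eps_sqrt: "\<exists>n::nat. sqrt (1 / eps) = real n"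
    and simple_m: "real m > exp (exp (eps powr (-30)))"
    and simple_q: "real q = eps * real m"
    and rule: "\<forall>hist. real (length hist) < 1 / eps \<longrightarrow>
        LP_approx eps I w v k (remaining I hist)
          (real m * (1 - real (length hist) * eps)) (X hist)"
    and opt: "is_optimal_solution I w v m k Cstar"
    and j: "1 \<le> j" "real j \<le> 1 / eps - 1"
    and h: "length h = j" "reachable X q h"
    and iI: "i \<in> I"
  shows "lam eps I w k q X j h (gam eps I w k q X (\<Union>(set Cstar)) (j - 1) h) i \<le> 1
       \<and> gam eps I w k q X (\<Union>(set Cstar)) j h i \<le> 1"
  proof -
  have qpos: "q \<ge> 1"
  proof -
    have "real q > 0" using simple_q eps mpos by simp
    then show ?thesis by simp
  qed
  have key: "lam eps I w k q X jj h g i' \<le> 1"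
    if jj1: "1 \<le> jj" and jjj: "jj \<le> j" and g1: "\<forall>i. g i \<le> 1" for jj g i'
  proof (cases "i' \<in> remaining I (take (jj - 1) h)")
    case False
    then show ?thesis by (simp add: lam_def)
  next
    case True
    define hist where "hist = take (jj - 1) h"
    have lh: "length hist = jj - 1" using h jjj by (simp add: hist_def)
    have rj: "real (jj - 1) = real jj - 1" using jj1 by simp
    have jjb: "real jj \<le> 1 / eps - 1" using jjj j by linarith
    have jje: "real jj * eps \<le> 1 - eps"
    proof -
      have "real jj * eps \<le> (1 / eps - 1) * eps" using jjb eps by (simp add: mult_right_mono)
      also have "\<dots> = 1 - eps" using eps by (simp add: field_simps)
      finally show ?thesis .
    qed
    have "real (length hist) < 1 / eps" using lh rj jjb by simp
    then have lp: "LP_feasible I w k (remaining I hist) (real m * (1 - real (length hist) * eps)) (X hist)"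
      using rule by (simp add: LP_approx_def)
    define M where "M = real m * (1 - (real jj - 1) * eps)"
    define x where "x = X hist"
    have fn: "fnorm I w k x = M" using lp lh rj by (simp add: LP_feasible_def M_def x_def)
    have ff: "feasible_frac I w k x" using lp by (simp add: LP_feasible_def x_def)
    have fr: "is_frac_solution I w k x" using ff by (simp add: feasible_frac_def)
    have iI': "i' \<in> I" using True by (simp add: remaining_def)
    define c where "c = cover I w k x i'"
    have c1: "c \<le> 1" using ff iI' by (simp add: feasible_frac_def c_def)
    have c0: "c \<ge> 0" using fr by (auto simp: c_def cover_def is_frac_solution_def intro!: sum_nonneg)
    have d2: "1 - (real jj - 1) * eps \<ge> 2 * eps" using jje by (simp add: algebra_simps)
    have Mq: "M \<ge> 2 * real q"
    proof -
      have "real m * (2 * eps) \<le> real m * (1 - (real jj - 1) * eps)"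
        using d2 by (simp add: mult_left_mono)
      then show ?thesis using simple_q by (simp add: M_def algebra_simps)
    qed
    have M1: "M \<ge> 1" using Mq qpos by simp
    have Mpos: "M > 0" using M1 by simp
    have P: "surv_prob I w k q X jj h i' = (1 - c / M) ^ q"
    proof -
      have "{Rs. i' \<in> remaining I (take (jj - 1) h) - \<Union>(set Rs)} = {Rs. \<forall>R\<in>set Rs. i' \<notin> R}"
        using True by auto
      then show ?thesis
        unfolding surv_prob_def
        using iid_prob[of q "config_pmf I w k x" i'] config_prob[OF finI fr, of i'] fn Mpos
        by (simp add: hist_def x_def c_def)
    qed
    have cM: "c / M \<le> 1" using c1 M1 by simp
    have bern: "1 + real q * (- (c / M)) \<le> (1 - c / M) ^ q"
      using Bernoulli_inequality[of "- (c / M)" q] cM by simp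
    have "real q * (c / M) \<le> real q * (1 / M)"
    proof -
      have "c / M \<le> 1 / M" using c1 Mpos by (simp add: divide_right_mono)
      then show ?thesis by (rule mult_left_mono) simp
    qed
    then have b2: "1 - real q / M \<le> (1 - c / M) ^ q" using bern by simp
    define fac where "fac = (1 - real jj * eps) / (1 - (real jj - 1) * eps)"
    have fac_eq: "fac = 1 - real q / M"
    proof -
      have pos: "1 - (real jj - 1) * eps > 0" using d2 eps by linarith
      have "real q / M = eps / (1 - (real jj - 1) * eps)"
        using simple_q mpos pos by (simp add: M_def)
      then show ?thesis using pos by (simp add: fac_def field_simps)
    qed
    have fac0: "fac > 0"
    proof -
      have "1 - real jj * eps > 0" using jje eps by linarith
      moreover have "1 - (real jj - 1) * eps > 0" using d2 eps by linarith
      ultimately show ?thesis by (simp add: fac_def)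
    qed
    define Pv where "Pv = surv_prob I w k q X jj h i'"
    have facP: "fac \<le> Pv" using b2 fac_eq P Pv_def by simp
    have Ppos: "Pv > 0" using fac0 facP by simp
    define a where "a = fac * (1 / Pv)"
    have a0: "a \<ge> 0" using fac0 Ppos by (simp add: a_def)
    have a1: "a \<le> 1" using facP Ppos by (simp add: a_def)
    have lamv: "lam eps I w k q X jj h g i' = a * g i'"
      using True by (simp add: lam_def a_def fac_def Pv_def)
    have "a * g i' \<le> 1"
    proof (cases "g i' \<ge> 0")
      case True
      then have "a * g i' \<le> 1 * g i'" using mult_right_mono[OF a1 True] by simp
      moreover have "g i' \<le> 1" using g1 by simp
      ultimately show ?thesis by linarith
    next
      case False
      then have "a * g i' \<le> 0" using a0 by (simp add: mult_nonneg_nonpos)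
      then show ?thesis by simp
    qed
    then show ?thesis using lamv by simp
  qed
  have gb: "\<forall>jj\<le>j. \<forall>i. gam eps I w k q X (\<Union>(set Cstar)) jj h i \<le> 1"
  proof (intro allI impI)
    fix jj i assume "jj \<le> j"
    then show "gam eps I w k q X (\<Union>(set Cstar)) jj h i \<le> 1"
    proof (induction jj arbitrary: i)
      case 0
      then show ?case by (simp add: indicator_def)
    next
      case (Suc jj)
      have "\<forall>i. gam eps I w k q X (\<Union>(set Cstar)) jj h i \<le> 1" using Suc by simp
      then have "lam eps I w k q X (Suc jj) h (gam eps I w k q X (\<Union>(set Cstar)) jj h) i \<le> 1"
        using key[of "Suc jj"] Suc.prems by simp
      then show ?case by simp
    qed
  qed
  have "\<forall>i. gam eps I w k q X (\<Union>(set Cstar)) (j - 1) h i \<le> 1" using gb by simp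
  then have "lam eps I w k q X j h (gam eps I w k q X (\<Union>(set Cstar)) (j - 1) h) i \<le> 1"
    using key[of j] j by simp
  then show ?thesis using gb by simp
qed

end
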